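(* Let $\Pi$ be an equitative protocol for a distribution type $\tau$ and let $\rho$ be a run of $\Pi$. Then there is a constant $\gamma=\gamma(\rho)\in(0,1]$ such that for every deal $H$ of type $\tau$, $\Pr(\rho\mid H)=\gamma$ if $H\in\mathrm{Poss}(\rho)$ and $\Pr(\rho\mid H)=0$ otherwise.
   Context: Let $\mathcal A$ be a finite set of agents listed in speaking order $P_0,\dots,P_m$. A distribution type is a vector $\tau=(\tau_P)_{P\in\mathcal A}$ of positive integers, $|\tau|=\sum_P\tau_P$. The deck $\Omega$ is a set of $|\tau|$ cards; a deal of type $\tau$ is a partition $H=(H_P)_P$ of $\Omega$ with $|H_P|=\tau_P$. Fix a set of tokens; a run is a finite sequence $\rho=a_0,\dots,a_n$ of tokens, $\rho_{<k}=a_0,\dots,a_{k-1}$. A protocol for $\tau$ is a function $\Pi$ assigning to every deal $H$ and run $\rho$ a set of tokens $\Pi(H,\rho)$ such that if $k$ is the remainder of $|\rho|$ modulo $m+1$ and $H_{P_k}=H'_{P_k}$, then $\Pi(H,\rho)=\Pi(H',\rho)$. An execution is a pair $(H,\rho)$ with $a_k\in\Pi(H,\rho_{<k})$ for all $k\le n$; $\rho$ is a run of $\Pi$ if some $(H,\rho)$ is an execution. $\mathrm{Poss}(\rho)$ is the set of deals $H$ such that $(H,\rho)$ is an execution. $\Pi$ is equitative if for every run $\rho$ of $\Pi$ there is $k=k(\rho)$ with $|\Pi(H,\rho)|=k$ for all $H\in\mathrm{Poss}(\rho)$. Probability model: given the deal $H$, starting from the empty run, while $\Pi(H,\rho)\neq\emptyset$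 for the current run $\rho$ a token is drawn uniformly at random from $\Pi(H,\rho)$ and appended; $\Pr(\rho\mid H)$ is the probability that the first $|\rho|$ tokens produced are exactly $\rho$. *)

theory Defs
  imports Main "HOL.Real"
begin

text \<open>Agents are given as a list in speaking order P_0, ..., P_m (distinct, nonempty).
  A distribution type is tau :: 'p => nat (only its values on the agents matter).\<close>

definition is_deal :: "'p list \<Rightarrow> ('p \<Rightarrow> nat) \<Rightarrow> 'c set \<Rightarrow> ('p \<Rightarrow> 'c set) \<Rightarrow> bool" where
  "is_deal agents tau Omega H \<longleftrightarrow>
     (\<forall>P \<in> set agents. H P \<subseteq> Omega \<and> card (H P) = tau P) \<and>
     (\<forall>P \<in> set agents. \<forall>Q \<in> set agents. P \<noteq> Q \<longrightarrow> H P \<inter> H Q = {}) \<and>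
     (\<Union>P \<in> set agents. H P) = Omega \<and>
     (\<forall>P. P \<notin> set agents \<longrightarrow> H P = {})"

text \<open>A protocol: on the turn of agent P_k (k = |rho| mod (m+1)) the set of allowed
  tokens depends only on the hand of P_k.\<close>
definition is_protocol ::
  "'p list \<Rightarrow> ('p \<Rightarrow> nat) \<Rightarrow> 'c set \<Rightarrow> (('p \<Rightarrow> 'c set) \<Rightarrow> 'a list \<Rightarrow> 'a set) \<Rightarrow> bool" where
  "is_protocol agents tau Omega Pi \<longleftrightarrow>
     (\<forall>H H' rho. is_deal agents tau Omega H \<longrightarrow> is_deal agents tau Omega H' \<longrightarrow>
        H (agents ! (length rho mod length agents)) = H' (agents ! (length rho mod length agents)) \<longrightarrow>
        Pi H rho = Pi H' rho)"

definition is_execution ::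
  "'p list \<Rightarrow> ('p \<Rightarrow> nat) \<Rightarrow> 'c set \<Rightarrow> (('p \<Rightarrow> 'c set) \<Rightarrow> 'a list \<Rightarrow> 'a set)
     \<Rightarrow> ('p \<Rightarrow> 'c set) \<Rightarrow> 'a list \<Rightarrow> bool" where
  "is_execution agents tau Omega Pi H rho \<longleftrightarrow>
     is_deal agents tau Omega H \<and> (\<forall>k < length rho. rho ! k \<in> Pi H (take k rho))"

definition is_run ::
  "'p list \<Rightarrow> ('p \<Rightarrow> nat) \<Rightarrow> 'c set \<Rightarrow> (('p \<Rightarrow> 'c set) \<Rightarrow> 'a list \<Rightarrow> 'a set) \<Rightarrow> 'a list \<Rightarrow> bool" where
  "is_run agents tau Omega Pi rho \<longleftrightarrow> (\<exists>H. is_execution agents tau Omega Pi H rho)"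

definition Poss ::
  "'p list \<Rightarrow> ('p \<Rightarrow> nat) \<Rightarrow> 'c set \<Rightarrow> (('p \<Rightarrow> 'c set) \<Rightarrow> 'a list \<Rightarrow> 'a set) \<Rightarrow> 'a list
     \<Rightarrow> ('p \<Rightarrow> 'c set) set" where
  "Poss agents tau Omega Pi rho = {H. is_execution agents tau Omega Pi H rho}"

definition equitative ::
  "'p list \<Rightarrow> ('p \<Rightarrow> nat) \<Rightarrow> 'c set \<Rightarrow> (('p \<Rightarrow> 'c set) \<Rightarrow> 'a list \<Rightarrow> 'a set) \<Rightarrow> bool" where
  "equitative agents tau Omega Pi \<longleftrightarrow>
     (\<forall>rho. is_run agents tau Omega Pi rho \<longrightarrow>
        (\<exists>k. \<forall>H \<in> Poss agents tau Omega Pi rho. card (Pi H rho) = k))"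

text \<open>Probability that the random process (uniform draw from Pi H rho while nonempty)
  produces rho as its first |rho| tokens: chain rule over the successive uniform draws.\<close>
definition run_prob :: "(('p \<Rightarrow> 'c set) \<Rightarrow> 'a list \<Rightarrow> 'a set) \<Rightarrow> ('p \<Rightarrow> 'c set) \<Rightarrow> 'a list \<Rightarrow> real" where
  "run_prob Pi H rho =
     (\<Prod>k < length rho. if rho ! k \<in> Pi H (take k rho)
                         then 1 / real (card (Pi H (take k rho))) else 0)"

end

theory Submission
  imports Defs
begin

lemma exec_take:
  assumes "is_execution agents tau Omega Pi H rho"
  shows "is_execution agents tau Omega Pi H (take k rho)"
  using assms unfolding is_execution_def by (auto simp: min_def)

theorem mainTheorem3:
  fixes agents :: "'p list" and tau :: "'p \<Rightarrow> nat" and Omega :: "'c set"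
    and Pi :: "('p \<Rightarrow> 'c set) \<Rightarrow> 'a list \<Rightarrow> 'a set" and rho :: "'a list"
  assumes "agents \<noteq> []" and "distinct agents"
    and "\<forall>P \<in> set agents. tau P > 0"
    and "finite Omega" and "card Omega = (\<Sum>P \<leftarrow> agents. tau P)"
    and "is_protocol agents tau Omega Pi"
    and fin: "\<forall>H r. is_deal agents tau Omega H \<longrightarrow> finite (Pi H r)"
    and eq: "equitative agents tau Omega Pi"
    and run: "is_run agents tau Omega Pi rho"
  shows "\<exists>\<gamma>::real. 0 < \<gamma> \<and> \<gamma> \<le> 1 \<and>
           (\<forall>H. is_deal agents tau Omega H \<longrightarrow>
              run_prob Pi H rho = (if H \<in> Poss agents tau Omega Pi rho then \<gamma> else 0))"
proof -
  obtain H0 where H0: "is_execution agents tau Omega Pi H0 rho"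
    using run unfolding is_run_def by blast
  define \<gamma> where "\<gamma> = (\<Prod>k < length rho. 1 / real (card (Pi H0 (take k rho))))"
  have cpos: "card (Pi H (take k rho)) > 0"
    if "is_execution agents tau Omega Pi H rho" "k < length rho" for H k
  proof -
    have "rho ! k \<in> Pi H (take k rho)" "is_deal agents tau Omega H"
      using that unfolding is_execution_def by auto
    then show ?thesis using fin card_gt_0_iff by blast
  qed
  have "0 < \<gamma>" unfolding \<gamma>_def using cpos[OF H0]
    by (intro prod_pos) auto
  moreover have "\<gamma> \<le> 1" unfolding \<gamma>_def
  proof (rule prod_le_1)
    fix k assume "k \<in> {..<length rho}"
    then have "card (Pi H0 (take k rho)) \<ge> 1" using cpos[OF H0, of k] by auto
    then show "0 \<le> 1 / real (card (Pi H0 (take k rho))) \<and> 1 / real (card (Pi H0 (take k rho))) \<le> 1"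
      by auto
  qed
  moreover have "run_prob Pi H rho = (if H \<in> Poss agents tau Omega Pi rho then \<gamma> else 0)"
    if D: "is_deal agents tau Omega H" for H
  proof (cases "H \<in> Poss agents tau Omega Pi rho")
    case True
    then have ex: "is_execution agents tau Omega Pi H rho" by (simp add: Poss_def)
    have "run_prob Pi H rho = \<gamma>"
      unfolding run_prob_def \<gamma>_def
    proof (rule prod.cong[OF refl])
      fix k assume k: "k \<in> {..<length rho}"
      have mem: "rho ! k \<in> Pi H (take k rho)" using ex k unfolding is_execution_def by auto
      have "is_run agents tau Omega Pi (take k rho)"
        using exec_take[OF ex] unfolding is_run_def by blast
      then obtain c where c: "\<forall>G \<in> Poss agents tau Omega Pi (take k rho). card (Pi G (take k rho)) = c"
        using eq unfolding equitative_def by blast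
      have "H \<in> Poss agents tau Omega Pi (take k rho)" "H0 \<in> Poss agents tau Omega Pi (take k rho)"
        using exec_take[OF ex] exec_take[OF H0] by (auto simp: Poss_def)
      then have "card (Pi H (take k rho)) = card (Pi H0 (take k rho))" using c by simp
      then show "(if rho ! k \<in> Pi H (take k rho) then 1 / real (card (Pi H (take k rho))) else 0)
          = 1 / real (card (Pi H0 (take k rho)))" using mem by simp
    qed
    then show ?thesis using True by simp
  next
    case False
    then obtain k where k: "k < length rho" "rho ! k \<notin> Pi H (take k rho)"
      using D unfolding Poss_def is_execution_def by auto
    have "run_prob Pi H rho = 0" unfolding run_prob_def
      by (rule prod_zero) (use k in auto)
    then show ?thesis using False by simp
  qed
  ultimately show ?thesis by blast
qed

end
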